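(* Let $N\ge2$ and let $(b,a)\in\mathcal{M}$ satisfy $S(b,a)=(b,a)$. Then (i) $I_k(b,a)=I_{N-k}(b,a)$ for all $1\le k\le N-1$; (ii) $\lambda_j(b,a)=-\lambda_{2N+1-j}(b,a)$ for all $1\le j\le 2N$; (iii) if $N$ is even, then $I_{N/2}(b,a)=0$ and $\lambda_N(b,a)=\lambda_{N+1}(b,a)=0$.
   Context: $\mathcal{M}=\mathbb{R}^N\times\mathbb{R}_{>0}^N$, indices mod $N$; $S(b,a)=(b',a')$ with $b'_j=-b_{N-j}$, $a'_j=a_{N-j-1}$. $y_1,y_2$ solve $a_{k-1}y(k-1)+b_ky(k)+a_ky(k+1)=\lambda y(k)$ with $y_1(0)=1,y_1(1)=0,y_2(0)=0,y_2(1)=1$; $\Delta_\lambda=y_1(N,\lambda)+y_2(N+1,\lambda)$; $\lambda_1\le\dots\le\lambda_{2N}$ are the roots of $\Delta_\lambda^2-4$ with multiplicity (the eigenvalues of the periodic and antiperiodic Jacobi matrices of $(b,a)$), satisfying $\lambda_1<\lambda_2\le\lambda_3<\dots<\lambda_{2N}$. Actions: $I_k=\frac1\pi\int_{\lambda_{2k}}^{\lambda_{2k+1}}\operatorname{arcosh}|\Delta_\lambda/2|\,d\lambda$ for $1\le k\le N-1$. *)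

theory Defs
  imports "HOL-Analysis.Analysis" "HOL-Computational_Algebra.Polynomial"
begin

text \<open>A point (b,a) of M = R^N x R_{>0}^N is represented by two sequences
  b a :: nat => real, of which only the values at 0..N-1 matter; all indices are
  read modulo N.\<close>

definition inM :: "nat \<Rightarrow> (nat \<Rightarrow> real) \<Rightarrow> (nat \<Rightarrow> real) \<Rightarrow> bool" where
  "inM N b a \<longleftrightarrow> (\<forall>j<N. a j > 0)"

definition S_b :: "nat \<Rightarrow> (nat \<Rightarrow> real) \<Rightarrow> nat \<Rightarrow> real" where
  "S_b N b j = - b ((N - j mod N) mod N)"

definition S_a :: "nat \<Rightarrow> (nat \<Rightarrow> real) \<Rightarrow> nat \<Rightarrow> real" where
  "S_a N a j = a ((N + N - 1 - j mod N) mod N)"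

definition S_fixed :: "nat \<Rightarrow> (nat \<Rightarrow> real) \<Rightarrow> (nat \<Rightarrow> real) \<Rightarrow> bool" where
  "S_fixed N b a \<longleftrightarrow> (\<forall>j<N. S_b N b j = b j \<and> S_a N a j = a j)"

text \<open>Solution of a_{k-1} y(k-1) + b_k y(k) + a_k y(k+1) = lambda y(k), as a polynomial
  in lambda, with prescribed y(0) = p0, y(1) = p1.\<close>
fun ypoly :: "nat \<Rightarrow> (nat \<Rightarrow> real) \<Rightarrow> (nat \<Rightarrow> real) \<Rightarrow> real poly \<Rightarrow> real poly \<Rightarrow> nat \<Rightarrow> real poly" where
  "ypoly N b a p0 p1 0 = p0"
| "ypoly N b a p0 p1 (Suc 0) = p1"
| "ypoly N b a p0 p1 (Suc (Suc n)) =
     smult (1 / a (Suc n mod N))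
       ([:- b (Suc n mod N), 1:] * ypoly N b a p0 p1 (Suc n) - smult (a (n mod N)) (ypoly N b a p0 p1 n))"

definition y1 :: "nat \<Rightarrow> (nat \<Rightarrow> real) \<Rightarrow> (nat \<Rightarrow> real) \<Rightarrow> nat \<Rightarrow> real poly" where
  "y1 N b a = ypoly N b a 1 0"

definition y2 :: "nat \<Rightarrow> (nat \<Rightarrow> real) \<Rightarrow> (nat \<Rightarrow> real) \<Rightarrow> nat \<Rightarrow> real poly" where
  "y2 N b a = ypoly N b a 0 1"

definition Delta_poly :: "nat \<Rightarrow> (nat \<Rightarrow> real) \<Rightarrow> (nat \<Rightarrow> real) \<Rightarrow> real poly" where
  "Delta_poly N b a = y1 N b a N + y2 N b a (N + 1)"

definition Delta :: "nat \<Rightarrow> (nat \<Rightarrow> real) \<Rightarrow> (nat \<Rightarrow> real) \<Rightarrow> real \<Rightarrow> real" where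
  "Delta N b a x = poly (Delta_poly N b a) x"

text \<open>lambda_1 <= ... <= lambda_{2N}: roots of Delta^2 - 4 with multiplicity, sorted
  (1-based indexing).\<close>
definition lam :: "nat \<Rightarrow> (nat \<Rightarrow> real) \<Rightarrow> (nat \<Rightarrow> real) \<Rightarrow> nat \<Rightarrow> real" where
  "lam N b a j = sorted_list_of_multiset (proots ((Delta_poly N b a)\<^sup>2 - 4)) ! (j - 1)"

definition action :: "nat \<Rightarrow> (nat \<Rightarrow> real) \<Rightarrow> (nat \<Rightarrow> real) \<Rightarrow> nat \<Rightarrow> real" where
  "action N b a k = (1 / pi) *
     integral {lam N b a (2 * k) .. lam N b a (2 * k + 1)} (\<lambda>x. arcosh \<bar>Delta N b a x / 2\<bar>)"

end

theory Submission
  imports Defs "HOL-Computational_Algebra.Fundamental_Theorem_Algebra"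
begin


lemma mp_add: "map_poly (of_real::real\<Rightarrow>'a::real_field) (p+q) = map_poly of_real p + map_poly of_real q"
  by (intro poly_eqI) (simp add: coeff_map_poly)
lemma mp_diff: "map_poly (of_real::real\<Rightarrow>'a::real_field) (p-q) = map_poly of_real p - map_poly of_real q"
  by (intro poly_eqI) (simp add: coeff_map_poly)
lemma mp_mult: "map_poly (of_real::real\<Rightarrow>'a::{real_field}) (p*q) = map_poly of_real p * map_poly of_real q"
  by (intro poly_eqI) (simp add: coeff_map_poly coeff_mult)
lemma mp_smult: "map_poly (of_real::real\<Rightarrow>'a::real_field) (smult c p) = smult (of_real c) (map_poly of_real p)"
  by (rule map_poly_smult) auto
lemma mp_pCons: "map_poly (of_real::real\<Rightarrow>'a::real_field) (pCons c p) = pCons (of_real c) (map_poly of_real p)"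
  by (rule map_poly_pCons) auto
lemma mp_real: "map_poly (of_real::real\<Rightarrow>real) p = p"
  by (rule map_poly_idI) auto

definition rec_sol :: "nat \<Rightarrow> (nat\<Rightarrow>real) \<Rightarrow> (nat\<Rightarrow>real) \<Rightarrow> 'a::real_field \<Rightarrow> (nat \<Rightarrow> 'a) \<Rightarrow> bool" where
"rec_sol N b a z y \<longleftrightarrow> (\<forall>n. of_real (a (Suc n mod N)) * y (Suc (Suc n)) =
    (z - of_real (b (Suc n mod N))) * y (Suc n) - of_real (a (n mod N)) * y n)"

definition ev :: "nat \<Rightarrow> (nat\<Rightarrow>real) \<Rightarrow> (nat\<Rightarrow>real) \<Rightarrow> real poly \<Rightarrow> real poly \<Rightarrow> 'a::{real_field} \<Rightarrow> nat \<Rightarrow> 'a" where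
 "ev N b a p0 p1 z n = poly (map_poly of_real (ypoly N b a p0 p1 n)) z"

context fixes N :: nat and b a :: "nat \<Rightarrow> real"
  assumes anz: "\<And>n. a (n mod N) \<noteq> 0"
begin

lemma rec_sol_ev: "rec_sol N b a (z::'a::real_field) (ev N b a p0 p1 z)"
  unfolding rec_sol_def ev_def
proof
  fix n
  let ?P = "\<lambda>k. poly (map_poly of_real (ypoly N b a p0 p1 k)) z"
  have e: "?P (Suc (Suc n)) = of_real (1 / a (Suc n mod N)) * ((z - of_real (b (Suc n mod N))) * ?P (Suc n) - of_real (a (n mod N)) * ?P n)"
    by (simp only: ypoly.simps mp_smult mp_diff mp_mult mp_pCons map_poly_0) (simp add: algebra_simps)
  have "of_real (a (Suc n mod N)) * (of_real (1 / a (Suc n mod N)) :: 'a) = 1"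
    using anz[of "Suc n"] by (simp flip: of_real_mult)
  then show "of_real (a (Suc n mod N)) * ?P (Suc (Suc n)) =
         (z - of_real (b (Suc n mod N))) * ?P (Suc n) - of_real (a (n mod N)) * ?P n"
    unfolding e using anz[of "Suc n"] by (simp flip: mult.assoc)
qed

lemma sol_unique:
  assumes "rec_sol N b a (z::'a::real_field) y" "rec_sol N b a z u" "y 0 = u 0" "y 1 = u 1"
  shows "y n = u n"
proof -
  have "y n = u n \<and> y (Suc n) = u (Suc n)" for n
  proof (induction n)
    case 0 then show ?case using assms by simp
  next
    case (Suc n)
    have "of_real (a (Suc n mod N)) * y (Suc (Suc n)) = of_real (a (Suc n mod N)) * u (Suc (Suc n))"
      using assms(1,2) Suc unfolding rec_sol_def by metis
    then have "y (Suc (Suc n)) = u (Suc (Suc n))" using anz[of "Suc n"] by simp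
    then show ?case using Suc by simp
  qed
  then show ?thesis by simp
qed

lemma rec_sol_lin:
  assumes "rec_sol N b a (z::'a::real_field) y" "rec_sol N b a z u"
  shows "rec_sol N b a z (\<lambda>n. c * y n + d * u n)"
  unfolding rec_sol_def
proof
  fix n
  let ?A = "of_real (a (Suc n mod N)) :: 'a" and ?B = "z - of_real (b (Suc n mod N))" and ?C = "of_real (a (n mod N)) :: 'a"
  have e1: "?A * y (Suc (Suc n)) - (?B * y (Suc n) - ?C * y n) = 0"
   and e2: "?A * u (Suc (Suc n)) - (?B * u (Suc n) - ?C * u n) = 0"
    using assms unfolding rec_sol_def by auto
  have "?A * (c * y (Suc (Suc n)) + d * u (Suc (Suc n))) - (?B * (c * y (Suc n) + d * u (Suc n)) - ?C * (c * y n + d * u n))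
     = c * (?A * y (Suc (Suc n)) - (?B * y (Suc n) - ?C * y n)) + d * (?A * u (Suc (Suc n)) - (?B * u (Suc n) - ?C * u n))"
    by (simp add: algebra_simps)
  also have "\<dots> = 0" using e1 e2 by simp
  finally show "?A * (c * y (Suc (Suc n)) + d * u (Suc (Suc n))) = ?B * (c * y (Suc n) + d * u (Suc n)) - ?C * (c * y n + d * u n)"
    by simp
qed

lemma wronsk:
  assumes "rec_sol N b a (z::'a::real_field) u" "rec_sol N b a z v"
  shows "of_real (a (n mod N)) * (u n * v (Suc n) - u (Suc n) * v n) = of_real (a 0) * (u 0 * v 1 - u 1 * v 0)"
proof (induction n)
  case 0 then show ?case by simp
next
  case (Suc n)
  have u: "of_real (a (Suc n mod N)) * u (Suc (Suc n)) = (z - of_real (b (Suc n mod N))) * u (Suc n) - of_real (a (n mod N)) * u n"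
   and v: "of_real (a (Suc n mod N)) * v (Suc (Suc n)) = (z - of_real (b (Suc n mod N))) * v (Suc n) - of_real (a (n mod N)) * v n"
    using assms unfolding rec_sol_def by auto
  have "of_real (a (Suc n mod N)) * (u (Suc n) * v (Suc (Suc n)) - u (Suc (Suc n)) * v (Suc n))
      = u (Suc n) * (of_real (a (Suc n mod N)) * v (Suc (Suc n))) - (of_real (a (Suc n mod N)) * u (Suc (Suc n))) * v (Suc n)"
    by (simp add: algebra_simps)
  also have "\<dots> = of_real (a (n mod N)) * (u n * v (Suc n) - u (Suc n) * v n)"
    unfolding u v by (simp add: algebra_simps)
  finally show ?case using Suc by simp
qed

lemma step_coeff: "coeff (smult c ([:-\<beta>,1:]*q - smult \<gamma> (p::real poly))) (Suc m) = c*(coeff q m - \<beta>*coeff q (Suc m) - \<gamma>*coeff p (Suc m))"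
  by (simp add: algebra_simps)

lemma step_deg: "degree (smult c ([:-\<beta>,1:]*q - smult \<gamma> (p::real poly))) \<le> max (Suc (degree q)) (degree p)"
proof -
  have d1: "degree ([:-\<beta>,1:]*q) \<le> Suc (degree q)"
    using degree_mult_le[of "[:-\<beta>,1:]" q] by simp
  have d2: "degree (smult \<gamma> p) \<le> degree p" by (rule degree_smult_le)
  have "degree ([:-\<beta>,1:]*q - smult \<gamma> p) \<le> max (degree ([:-\<beta>,1:]*q)) (degree (smult \<gamma> p))"
    by (rule degree_diff_le_max)
  also have "\<dots> \<le> max (Suc (degree q)) (degree p)" using d1 d2 by (rule max.mono)
  finally show ?thesis using degree_smult_le order_trans by blast
qed

lemma deg_y1: "degree (ypoly N b a 1 0 k) \<le> k - 1"
proof -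
  have "degree (ypoly N b a 1 0 k) \<le> k - 1 \<and> degree (ypoly N b a 1 0 (Suc k)) \<le> Suc k - 1"
  proof (induction k)
    case 0 then show ?case by simp
  next
    case (Suc n)
    have "degree (ypoly N b a 1 0 (Suc (Suc n))) \<le> max (Suc (degree (ypoly N b a 1 0 (Suc n)))) (degree (ypoly N b a 1 0 n))"
      by (simp only: ypoly.simps step_deg)
    then show ?case using Suc by auto
  qed
  then show ?thesis by simp
qed

lemma deg_y2: "degree (ypoly N b a 0 1 k) \<le> k - 1 \<and> (k \<ge> 1 \<longrightarrow> coeff (ypoly N b a 0 1 k) (k - 1) \<noteq> 0)"
proof -
  have "(degree (ypoly N b a 0 1 k) \<le> k - 1 \<and> (k \<ge> 1 \<longrightarrow> coeff (ypoly N b a 0 1 k) (k - 1) \<noteq> 0)) \<and>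
        (degree (ypoly N b a 0 1 (Suc k)) \<le> Suc k - 1 \<and> coeff (ypoly N b a 0 1 (Suc k)) k \<noteq> 0)"
  proof (induction k)
    case 0 then show ?case by simp
  next
    case (Suc n)
    have d: "degree (ypoly N b a 0 1 (Suc (Suc n))) \<le> max (Suc (degree (ypoly N b a 0 1 (Suc n)))) (degree (ypoly N b a 0 1 n))"
      by (simp only: ypoly.simps step_deg)
    have c1: "coeff (ypoly N b a 0 1 (Suc n)) (Suc n) = 0" "coeff (ypoly N b a 0 1 n) (Suc n) = 0"
      using Suc.IH by (auto intro!: coeff_eq_0)
    have "coeff (ypoly N b a 0 1 (Suc (Suc n))) (Suc n) = (1 / a (Suc n mod N)) * coeff (ypoly N b a 0 1 (Suc n)) n"
      by (simp only: ypoly.simps step_coeff c1) simp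
    then have "coeff (ypoly N b a 0 1 (Suc (Suc n))) (Suc n) \<noteq> 0" using Suc.IH anz[of "Suc n"] by simp
    then show ?case using Suc.IH d by auto
  qed
  then show ?thesis by blast
qed

lemma deg_Delta: "N \<ge> 1 \<Longrightarrow> degree (Delta_poly N b a) = N"
proof -
  assume N: "N \<ge> 1"
  have "degree (ypoly N b a 0 1 (N+1)) = N"
    using deg_y2[of "N+1"] by (auto intro: le_antisym le_degree)
  moreover have "degree (ypoly N b a 1 0 N) < N" using deg_y1[of N] N by linarith
  ultimately show ?thesis unfolding Delta_poly_def y1_def y2_def
    by (simp add: degree_add_eq_right)
qed

lemma ev_init: "ev N b a 1 0 z 0 = (1::'a::real_field)" "ev N b a 1 0 z 1 = (0::'a)"
  "ev N b a 0 1 z 0 = (0::'a)" "ev N b a 0 1 z 1 = (1::'a)"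
  by (simp_all add: ev_def)

lemma ev_init': "ev N b a 1 0 z (Suc 0) = (0::'a::real_field)" "ev N b a 0 1 z (Suc 0) = (1::'a)"
  by (simp_all add: ev_def)

lemma poly_Delta_gen: "poly (map_poly (of_real::real\<Rightarrow>'a::real_field) (Delta_poly N b a)) z = ev N b a 1 0 z N + ev N b a 0 1 z (N+1)"
  by (simp add: Delta_poly_def mp_add ev_def y1_def y2_def)

lemma det_one:
  assumes "N \<ge> 1"
  shows "ev N b a 1 0 z N * ev N b a 0 1 z (Suc N) - ev N b a 1 0 z (Suc N) * ev N b a 0 1 z N = (1::'a::real_field)"
proof -
  have "of_real (a (N mod N)) * (ev N b a 1 0 z N * ev N b a 0 1 z (Suc N) - ev N b a 1 0 z (Suc N) * ev N b a 0 1 z N)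
       = (of_real (a 0) :: 'a)"
    using wronsk[OF rec_sol_ev[of z 1 0] rec_sol_ev[of z 0 1], of N] by (simp add: ev_init ev_init')
  then show ?thesis using anz[of 0] by simp
qed

lemma real_root:
  assumes N: "N \<ge> 1" and e: "e = 1 \<or> e = -1"
    and z: "poly (map_poly of_real (Delta_poly N b a)) z = 2 * complex_of_real e"
  shows "Im z = 0"
proof -
  define u where "u = ev N b a 1 0 z" 
  define v where "v = ev N b a 0 1 z"
  have det: "u N * v (Suc N) - u (Suc N) * v N = 1" using det_one[OF N] unfolding u_def v_def .
  have tr: "u N + v (Suc N) = 2 * of_real e" using z poly_Delta_gen[of z] unfolding u_def v_def by simp
  have ee: "of_real e * (of_real e :: complex) = 1" using e by auto
  obtain c1 c2 where c: "c1 \<noteq> 0 \<or> c2 \<noteq> 0" "c1 * u N + c2 * v N = of_real e * c1"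
     "c1 * u (Suc N) + c2 * v (Suc N) = of_real e * c2"
  proof (cases "v N \<noteq> 0 \<or> u N \<noteq> of_real e")
    case True
    show ?thesis
    proof (rule that[of "v N" "of_real e - u N"])
      show "v N \<noteq> 0 \<or> of_real e - u N \<noteq> 0" using True by auto
      show "v N * u N + (of_real e - u N) * v N = of_real e * v N" by (simp add: algebra_simps)
      have f1: "v N * u (Suc N) = u N * v (Suc N) - 1" using det by (simp add: algebra_simps)
      have f2: "v (Suc N) = 2 * of_real e - u N" using tr by (simp add: algebra_simps)
      have "v N * u (Suc N) + (of_real e - u N) * v (Suc N) = (u N * v (Suc N) - 1) + (of_real e - u N) * v (Suc N)"
        by (simp only: f1)
      also have "\<dots> = of_real e * v (Suc N) - 1" by (simp add: algebra_simps)
      also have "\<dots> = of_real e * (2 * of_real e - u N) - 1" by (simp only: f2)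
      also have "\<dots> = 2 * (of_real e * of_real e) - of_real e * u N - 1" by (simp add: algebra_simps)
      also have "\<dots> = 2 * 1 - of_real e * u N - 1" by (simp only: ee)
      also have "\<dots> = of_real e * of_real e - of_real e * u N" by (simp add: ee)
      also have "\<dots> = of_real e * (of_real e - u N)" by (simp add: right_diff_distrib)
      finally show "v N * u (Suc N) + (of_real e - u N) * v (Suc N) = of_real e * (of_real e - u N)" .
    qed
  next
    case False
    then have "v N = 0" "u N = of_real e" by auto
    then have "v (Suc N) = of_real e" using tr by simp
    show ?thesis by (rule that[of 0 1]) (use \<open>v N = 0\<close> \<open>v (Suc N) = of_real e\<close> in auto)
  qed
  define y where "y n = c1 * u n + c2 * v n" for n
  have ys: "rec_sol N b a z y" unfolding y_def u_def v_def by (intro rec_sol_lin rec_sol_ev)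
  have y01: "y 0 = c1" "y 1 = c2" unfolding y_def u_def v_def by (simp_all add: ev_init ev_init')
  have yN: "y N = of_real e * c1" "y (Suc N) = of_real e * c2" using c unfolding y_def by (simp_all add: algebra_simps)
  define A where "A n = (of_real (a (n mod N)) :: complex)" for n
  define B where "B n = (of_real (b (n mod N)) :: complex)" for n
  have rec: "z * y (Suc n) = A (Suc n) * y (Suc (Suc n)) + B (Suc n) * y (Suc n) + A n * y n" for n
    using ys unfolding rec_sol_def A_def B_def by (simp add: algebra_simps)
  define f where "f n = A n * y n * cnj (y (Suc n))" for n
  define S1 where "S1 = (\<Sum>n<N. A (Suc n) * cnj (y (Suc n)) * y (Suc (Suc n)))"
  define R where "R = (\<Sum>n<N. B (Suc n) * (cnj (y (Suc n)) * y (Suc n)))"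
  have AR: "cnj (A n) = A n" "cnj (B n) = B n" for n unfolding A_def B_def by simp_all
  have cS1: "cnj S1 = (\<Sum>n<N. f (Suc n))" unfolding S1_def f_def by (simp add: AR mult_ac)
  have tel: "(\<Sum>n<N. f (Suc n)) - (\<Sum>n<N. f n) = f N - f 0"
    using sum_lessThan_telescope[of f N] by (simp add: sum_subtractf)
  have fN: "f N = f 0" unfolding f_def using yN y01 ee e
    by (auto simp: A_def)
  have sumeq: "z * (\<Sum>n<N. cnj (y (Suc n)) * y (Suc n)) = R + S1 + (\<Sum>n<N. f n)"
  proof -
    have "z * (\<Sum>n<N. cnj (y (Suc n)) * y (Suc n)) = (\<Sum>n<N. cnj (y (Suc n)) * (z * y (Suc n)))"
      by (simp add: sum_distrib_left mult_ac)
    also have "\<dots> = (\<Sum>n<N. B (Suc n) * (cnj (y (Suc n)) * y (Suc n)) + A (Suc n) * cnj (y (Suc n)) * y (Suc (Suc n)) + f n)"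
      unfolding rec f_def by (intro sum.cong) (simp_all add: algebra_simps)
    finally show ?thesis unfolding R_def S1_def by (simp add: sum.distrib)
  qed
  have "(\<Sum>n<N. f n) = cnj S1" using cS1 tel fN by simp
  then have imr: "Im (R + S1 + (\<Sum>n<N. f n)) = 0"
    unfolding R_def by (simp add: Im_sum B_def)
  define P where "P = (\<Sum>n<N. (cmod (y (Suc n)))^2)"
  have Peq: "(\<Sum>n<N. cnj (y (Suc n)) * y (Suc n)) = of_real P"
    unfolding P_def of_real_sum by (intro sum.cong refl) (metis complex_norm_square mult.commute)
  have "P \<noteq> 0"
  proof
    assume "P = 0"
    then have "\<forall>n\<in>{..<N}. (cmod (y (Suc n)))^2 = 0" unfolding P_def
      by (subst sum_nonneg_eq_0_iff[symmetric]) auto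
    then have h: "\<And>n. n < N \<Longrightarrow> y (Suc n) = 0" by auto
    have "y 1 = 0" using h[of 0] N by simp
    moreover have "y N = 0" using h[of "N-1"] N by simp
    ultimately have "c2 = 0" "of_real e * c1 = 0" using y01 yN N by auto
    then show False using c(1) e by auto
  qed
  have "Im (z * of_real P) = 0" using sumeq imr Peq by simp
  then show ?thesis using \<open>P \<noteq> 0\<close> by simp
qed

lemma rec_sol_real: "rec_sol N b a (x::real) y \<Longrightarrow> a (Suc n mod N) * y (Suc (Suc n)) = (x - b (Suc n mod N)) * y (Suc n) - a (n mod N) * y n"
  unfolding rec_sol_def by simp

lemma refl_center:
  assumes sa: "\<And>j. j < c \<Longrightarrow> a ((c+j) mod N) = a ((c - j - 1) mod N)"
    and sb: "\<And>j. j < c \<Longrightarrow> b ((c+j) mod N) = - b ((c-j) mod N)"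
    and y: "rec_sol N b a (x::real) y" and w: "rec_sol N b a (-x) w"
    and dc: "d mod N = c mod N" and c1: "c \<ge> 1"
    and w0: "w d = y c" and w1: "w (Suc d) = - y (c - 1)"
  shows "j \<le> c \<Longrightarrow> w (d + j) = (-1)^j * y (c - j)"
proof -
  have md: "(d + k) mod N = (c + k) mod N" for k using dc by (metis mod_add_left_eq)
  have "j + 1 \<le> c \<longrightarrow> w (d + j) = (-1)^j * y (c - j) \<and> w (d + Suc j) = (-1)^(Suc j) * y (c - Suc j)" for j
  proof (induction j)
    case 0 then show ?case using w0 w1 by simp
  next
    case (Suc j)
    show ?case
    proof
      assume h: "Suc j + 1 \<le> c"
      then have IH: "w (d + j) = (-1)^j * y (c - j)" "w (d + Suc j) = (-1)^(Suc j) * y (c - Suc j)"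
        using Suc.IH by auto
      have rw: "a ((d + Suc j) mod N) * w (Suc (Suc (d + j))) = (-x - b ((d + Suc j) mod N)) * w (Suc (d + j)) - a ((d + j) mod N) * w (d + j)"
        using rec_sol_real[OF w, of "d+j"] by simp
      have ry: "a (Suc (c - j - 2) mod N) * y (c - j) = (x - b (Suc (c - j - 2) mod N)) * y (c - Suc j) - a ((c - j - 2) mod N) * y (c - j - 2)"
      proof -
        have e1: "Suc (Suc (c - j - 2)) = c - j" "Suc (c - j - 2) = c - Suc j" "Suc (c - Suc j) = c - j" using h by auto
        show ?thesis using rec_sol_real[OF y, of "c-j-2"] by (simp only: e1)
      qed
      have A1: "a ((d + Suc j) mod N) = a ((c - j - 2) mod N)"
        using sa[of "Suc j"] h md[of "Suc j"] by (simp add: numeral_2_eq_2)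
      have A0: "a ((d + j) mod N) = a (Suc (c - j - 2) mod N)"
      proof -
        have "Suc (c - j - 2) = c - j - 1" using h by auto
        then show ?thesis using sa[of j] h md[of j] by simp
      qed
      have B1: "b ((d + Suc j) mod N) = - b (Suc (c - j - 2) mod N)"
      proof -
        have "Suc (c - j - 2) = c - Suc j" using h by auto
        then show ?thesis using sb[of "Suc j"] h md[of "Suc j"] by simp
      qed
      have anz2: "a ((c - j - 2) mod N) \<noteq> 0" by (rule anz)
      have "a ((c - j - 2) mod N) * w (Suc (Suc (d + j))) = (-1)^j * (a ((c - j - 2) mod N) * y (c - j - 2))"
      proof -
        have "a ((c - j - 2) mod N) * w (Suc (Suc (d + j))) = (-x + b (Suc (c - j - 2) mod N)) * ((-1)^(Suc j) * y (c - Suc j)) - a (Suc (c - j - 2) mod N) * ((-1)^j * y (c - j))"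
          using rw unfolding A1 A0 B1 IH[unfolded add_Suc_right] by simp
        also have "\<dots> = (-1)^j * ((x - b (Suc (c - j - 2) mod N)) * y (c - Suc j) - a (Suc (c - j - 2) mod N) * y (c - j))"
          by (simp add: algebra_simps)
        also have "\<dots> = (-1)^j * (a ((c - j - 2) mod N) * y (c - j - 2))"
        proof -
          have ry': "(x - b (Suc (c - j - 2) mod N)) * y (c - Suc j) - a (Suc (c - j - 2) mod N) * y (c - j) = a ((c - j - 2) mod N) * y (c - j - 2)"
            using ry by linarith
          show ?thesis by (simp only: ry')
        qed
        finally show ?thesis .
      qed
      then have W: "w (Suc (Suc (d + j))) = (-1)^j * y (c - j - 2)" using anz2 by (simp add: algebra_simps)
      have e1: "d + Suc (Suc j) = Suc (Suc (d + j))" "c - Suc (Suc j) = c - j - 2" by simp_all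
      have e2: "(-1::real)^(Suc (Suc j)) = (-1)^j" by simp
      have W2: "w (d + Suc (Suc j)) = (-1)^(Suc (Suc j)) * y (c - Suc (Suc j))"
        by (simp only: e1 e2 W)
      show "w (d + Suc j) = (-1)^(Suc j) * y (c - Suc j) \<and> w (d + Suc (Suc j)) = (-1)^(Suc (Suc j)) * y (c - Suc (Suc j))"
        using IH(2) W2 by blast
    qed
  qed
  note H = this
  assume jc: "j \<le> c"
  show "w (d + j) = (-1)^j * y (c - j)"
  proof (cases "j < c")
    case True then show ?thesis using H[of j] by simp
  next
    case False
    then have jj: "j = Suc (c - 1)" using jc c1 by simp
    have "c - 1 + 1 \<le> c" using c1 by simp
    then show ?thesis using H[of "c - 1"] jj by (simp only: simp_thms)
  qed
qed

end



lemma mp_inj: "map_poly (of_real::real\<Rightarrow>complex) p = map_poly of_real q \<Longrightarrow> p = q"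
  by (metis (no_types, lifting) coeff_map_poly of_real_0 of_real_eq_iff poly_eqI)

lemma mp_prod: "map_poly (of_real::real\<Rightarrow>complex) (\<Prod>i<(n::nat). f i) = (\<Prod>i<n. map_poly of_real (f i))"
  by (induction n) (simp_all add: mp_mult)

lemma real_rooted_factor:
  fixes q :: "real poly"
  assumes q0: "q \<noteq> 0" and rr: "\<And>z. poly (map_poly of_real q) z = 0 \<Longrightarrow> Im z = 0"
  obtains r where "q = smult (lead_coeff q) (\<Prod>i<degree q. [:-r i, 1:])"
proof -
  define qC where "qC = map_poly (of_real::real\<Rightarrow>complex) q"
  have dC: "degree qC = degree q" unfolding qC_def by (rule degree_map_poly) simp
  have lC: "lead_coeff qC = of_real (lead_coeff q)" unfolding qC_def
    using q0 by (intro lead_coeff_map_poly_nz) auto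
  obtain root where rt: "smult (lead_coeff qC) (\<Prod>i<degree qC. [:-root i, 1:]) = qC"
    using complex_poly_decompose' by blast
  have real: "root i = of_real (Re (root i))" if "i < degree q" for i
  proof -
    have "poly qC (root i) = lead_coeff qC * (\<Prod>j<degree qC. root i - root j)"
      by (subst rt[symmetric]) (simp add: poly_prod)
    also have "\<dots> = 0" using that dC by (simp add: prod_zero_iff) (metis lessThan_iff)
    finally have "Im (root i) = 0" using rr unfolding qC_def by blast
    then show ?thesis by (simp add: complex_eq_iff)
  qed
  define r where "r i = Re (root i)" for i
  have "map_poly of_real (smult (lead_coeff q) (\<Prod>i<degree q. [:-r i, 1:])) = qC"
  proof -
    have "map_poly of_real (smult (lead_coeff q) (\<Prod>i<degree q. [:-r i, 1:]))
        = smult (of_real (lead_coeff q)) (\<Prod>i<degree q. map_poly (of_real::real\<Rightarrow>complex) [:-r i, 1:])"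
      by (simp add: mp_smult mp_prod)
    also have "(\<Prod>i<degree q. map_poly (of_real::real\<Rightarrow>complex) [:-r i, 1:]) = (\<Prod>i<degree q. [:-root i, 1:])"
    proof (intro prod.cong refl)
      fix i assume "i \<in> {..<degree q}"
      then have "root i = of_real (r i)" using real r_def by auto
      then show "map_poly (of_real::real\<Rightarrow>complex) [:-r i, 1:] = [:-root i, 1:]"
        by (simp add: mp_pCons)
    qed
    finally show ?thesis using rt lC dC by simp
  qed
  then have "smult (lead_coeff q) (\<Prod>i<degree q. [:-r i, 1:]) = q" unfolding qC_def by (rule mp_inj)
  then show ?thesis using that by metis
qed

lemma proots_factor:
  fixes r :: "nat \<Rightarrow> real"
  assumes "c \<noteq> 0"
  shows "proots (smult c (\<Prod>i<n. [:-r i, 1:])) = (\<Sum>i<n. {#r i#})"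
  using assms by (simp add: proots_prod)

lemma size_sum_single: "size (\<Sum>i<(n::nat). {#r i#}) = n"
  by (induction n) auto

lemma image_sum_single: "image_mset f (\<Sum>i<(n::nat). {#r i#}) = (\<Sum>i<n. {#f (r i)#})"
  by (induction n) auto

lemma sym_roots:
  fixes q :: "real poly"
  assumes q0: "q \<noteq> 0" and rr: "\<And>z. poly (map_poly of_real q) z = 0 \<Longrightarrow> Im z = 0"
    and ev: "\<And>x. poly q (-x) = poly q x"
  shows "image_mset uminus (proots q) = proots q \<and> size (proots q) = degree q"
proof -
  obtain r where qr: "q = smult (lead_coeff q) (\<Prod>i<degree q. [:-r i, 1:])"
    using real_rooted_factor[OF q0 rr] by blast
  define n where "n = degree q"
  define c where "c = lead_coeff q"
  have c0: "c \<noteq> 0" using q0 c_def by simp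
  have qr': "q = smult c (\<Prod>i<n. [:-r i, 1:])" using qr unfolding c_def n_def .
  have "poly (smult (c * (-1)^n) (\<Prod>i<n. [:-(-r i), 1:])) x = poly q x" for x
  proof -
    have "poly (smult (c * (-1)^n) (\<Prod>i<n. [:-(-r i), 1:])) x = c * ((-1)^n * (\<Prod>i<n. r i + x))"
      by (simp add: poly_prod)
    also have "(-1::real)^n * (\<Prod>i<n. r i + x) = (\<Prod>i<n. -x - r i)"
    proof -
      have "(\<Prod>i<n. -x - r i) = (\<Prod>i<n. (-1) * (r i + x))" by (intro prod.cong) auto
      also have "\<dots> = (\<Prod>i<n. (-1::real)) * (\<Prod>i<n. r i + x)" by (rule prod.distrib)
      finally show ?thesis by simp
    qed
    also have "c * (\<Prod>i<n. -x - r i) = poly q (-x)"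
    proof -
      have "poly q (-x) = c * (\<Prod>i<n. - r i - x)" by (subst qr') (simp add: poly_prod)
      moreover have "(\<Prod>i<n. - r i - x) = (\<Prod>i<n. -x - r i)" by (intro prod.cong) auto
      ultimately show ?thesis by simp
    qed
    finally show ?thesis using ev by simp
  qed
  then have "poly (smult (c * (-1)^n) (\<Prod>i<n. [:-(-r i), 1:])) = poly q" by (intro ext)
  then have "smult (c * (-1)^n) (\<Prod>i<n. [:-(-r i), 1:]) = q" by (simp only: poly_eq_poly_eq_iff)
  then have q2: "q = smult (c * (-1)^n) (\<Prod>i<n. [:-(-r i), 1:])" by (rule sym)
  have "proots q = (\<Sum>i<n. {#- r i#})" by (subst q2, rule proots_factor) (simp add: c0)
  also have "\<dots> = image_mset uminus (\<Sum>i<n. {#r i#})" by (simp add: image_sum_single)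
  also have "(\<Sum>i<n. {#r i#}) = proots q" by (subst qr') (simp only: proots_factor[OF c0])
  finally have "image_mset uminus (proots q) = proots q" by simp
  moreover have "size (proots q) = degree q"
    by (subst qr') (simp add: proots_factor[OF c0] size_sum_single n_def)
  ultimately show ?thesis by blast
qed

lemma sorted_sym:
  fixes xs :: "real list"
  assumes s: "sorted xs" and ms: "mset (map uminus xs) = mset xs" and i: "i < length xs"
  shows "xs ! i = - xs ! (length xs - 1 - i)"
proof -
  define ys where "ys = map uminus (rev xs)"
  have "sorted ys" unfolding ys_def using s
    by (auto simp: sorted_iff_nth_mono rev_nth)
  moreover have "mset ys = mset xs" unfolding ys_def using ms by simp
  ultimately have "sort xs = ys" by (intro properties_for_sort) auto
  then have "xs = ys" using s by (simp add: sorted_sort_id)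
  then have "xs ! i = ys ! i" by simp
  also have "\<dots> = - xs ! (length xs - 1 - i)" unfolding ys_def using i by (simp add: rev_nth)
  finally show ?thesis .
qed




context fixes N :: nat and b a :: "nat \<Rightarrow> real"
  assumes N2: "N \<ge> 2" and M: "inM N b a" and S: "S_fixed N b a"
begin

lemma anzC: "a (n mod N) \<noteq> 0"
proof -
  have "n mod N < N" using N2 by simp
  then show ?thesis using M unfolding inM_def by fastforce
qed

lemma Sa: "j < N \<Longrightarrow> a ((N + N - 1 - j) mod N) = a j"
  using S unfolding S_fixed_def S_a_def by auto

lemma Sb: "j < N \<Longrightarrow> b ((N - j) mod N) = - b j"
  using S unfolding S_fixed_def S_b_def by fastforce

lemma modN: "k < N \<Longrightarrow> (N + k) mod N = k" by simp

lemma a_last: "a (N - 1) = a 0"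
proof -
  have "(N + N - 1 - 0) mod N = N - 1" using N2 modN[of "N - 1"] by (simp add: add_diff_assoc)
  then show ?thesis using Sa[of 0] N2 by simp
qed

lemma b0: "b 0 = 0"
  using Sb[of 0] N2 by simp

lemma sa_N: "j < N \<Longrightarrow> a ((N + j) mod N) = a ((N - j - 1) mod N)"
proof -
  assume j: "j < N"
  have "N + N - 1 - j = N + (N - 1 - j)" using j by simp
  then have "(N + N - 1 - j) mod N = N - 1 - j" using j modN[of "N - 1 - j"] by simp
  then show ?thesis using Sa[OF j] j by simp
qed

lemma sb_N: "j < N \<Longrightarrow> b ((N + j) mod N) = - b ((N - j) mod N)"
  using Sb by simp

lemma refl_N:
  assumes y: "rec_sol N b a (x::real) y" and w: "rec_sol N b a (-x) w"
    and w0: "w 0 = y N" and w1: "w (Suc 0) = - y (N - 1)" and j: "j \<le> N"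
  shows "w j = (-1)^j * y (N - j)"
  using refl_center[where N = N and b = b and a = a and c = N and d = 0, OF anzC sa_N sb_N y w _ _ w0 w1 j] N2 by simp

lemma alg2:
  fixes q11 q12 q21 q22 p11 p12 p21 p22 s :: real
  assumes det: "q11*q22 - q12*q21 = 1" and e1: "q21*p11 - q11*p12 = 0" and e2: "q21*p21 - q11*p22 = s"
    and e3: "q22*p11 - q12*p12 = -s" and e4: "q22*p21 - q12*p22 = 0"
  shows "p21 = -s*q12 \<and> p22 = -s*q22 \<and> p12 = -s*q21"
proof -
  have "p21 = p21 * (q11*q22 - q12*q21)" using det by simp
  also have "\<dots> = q11*(q22*p21 - q12*p22) - q12*(q21*p21 - q11*p22)" by (simp add: algebra_simps)
  also have "\<dots> = -s*q12" unfolding e2 e4 by simp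
  finally have A: "p21 = -s*q12" .
  have "p22 = p22 * (q11*q22 - q12*q21)" using det by simp
  also have "\<dots> = - q22*(q21*p21 - q11*p22) + q21*(q22*p21 - q12*p22)" by (simp add: algebra_simps)
  also have "\<dots> = -s*q22" unfolding e2 e4 by simp
  finally have B: "p22 = -s*q22" .
  have "p12 = p12 * (q11*q22 - q12*q21)" using det by simp
  also have "\<dots> = q21*(q22*p11 - q12*p12) - q22*(q21*p11 - q11*p12)" by (simp add: algebra_simps)
  also have "\<dots> = -s*q21" unfolding e1 e3 by simp
  finally have C: "p12 = -s*q21" .
  show ?thesis using A B C by blast
qed

lemma Delta_neg: "poly (Delta_poly N b a) (-x) = (-1)^N * poly (Delta_poly N b a) x"
proof -
  obtain m where Nm: "N = Suc m" using N2 by (cases N) auto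
  define u where "u = ev N b a 1 0 x"
  define v where "v = ev N b a 0 1 x"
  define U where "U = ev N b a 1 0 (-x)"
  define V where "V = ev N b a 0 1 (-x)"
  have su: "rec_sol N b a x u" and sv: "rec_sol N b a x v" and sU: "rec_sol N b a (-x) U" and sV: "rec_sol N b a (-x) V"
    unfolding u_def v_def U_def V_def using rec_sol_ev[where N = N and b = b and a = a, OF anzC] by blast+
  have i: "u 0 = 1" "u (Suc 0) = 0" "v 0 = 0" "v (Suc 0) = 1" "U 0 = 1" "U (Suc 0) = 0" "V 0 = 0" "V (Suc 0) = 1"
    unfolding u_def v_def U_def V_def using ev_init'[where N = N and b = b and a = a, OF anzC] ev_init[where N = N and b = b and a = a, OF anzC] by auto
  define s :: real where "s = (-1)^N"
  have sm: "(-1::real)^m = - s" unfolding s_def Nm by simp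
  define w1 where "w1 n = u N * U n + (- u m) * V n" for n
  have sw1: "rec_sol N b a (-x) w1" unfolding w1_def by (rule rec_sol_lin[where N = N and b = b and a = a, OF anzC sU sV])
  have w1r: "w1 j = (-1)^j * u (N - j)" if "j \<le> N" for j
    by (rule refl_N[OF su sw1]) (use i that Nm in \<open>simp_all add: w1_def\<close>)
  have E1: "u N * U m - u m * V m = 0" using w1r[of m] i Nm by (simp add: w1_def)
  have E2: "u N * U N - u m * V N = s" using w1r[of N] i by (simp add: w1_def s_def)
  define w2 where "w2 n = v N * U n + (- v m) * V n" for n
  have sw2: "rec_sol N b a (-x) w2" unfolding w2_def by (rule rec_sol_lin[where N = N and b = b and a = a, OF anzC sU sV])
  have w2r: "w2 j = (-1)^j * v (N - j)" if "j \<le> N" for j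
    by (rule refl_N[OF sv sw2]) (use i that Nm in \<open>simp_all add: w2_def\<close>)
  have E3: "v N * U m - v m * V m = - s" using w2r[of m] i Nm sm by (simp add: w2_def)
  have E4: "v N * U N - v m * V N = 0" using w2r[of N] i by (simp add: w2_def)
  have det: "u m * v N - v m * u N = 1"
  proof -
    have "a (m mod N) * (u m * v (Suc m) - u (Suc m) * v m) = a 0 * (u 0 * v 1 - u 1 * v 0)"
      using wronsk[where N = N and b = b and a = a, OF anzC su sv, of m] by simp
    moreover have "a (m mod N) = a 0" using a_last Nm by simp
    ultimately have "a 0 * (u m * v (Suc m) - u (Suc m) * v m) = a 0" using i by simp
    then have "a 0 * (u m * v (Suc m) - u (Suc m) * v m - 1) = 0" by (simp add: algebra_simps)
    then have "u m * v (Suc m) - u (Suc m) * v m - 1 = 0" using anzC[of 0] by simp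
    then show ?thesis using Nm by (simp add: algebra_simps)
  qed
  have P: "U N = -s * v m \<and> V N = -s * v N \<and> V m = -s * u N"
    by (rule alg2[OF det E1 E2 E3 E4])
  have vN1: "v (Suc N) = x * v N / a 0 - v m" and VN1: "V (Suc N) = -x * V N / a 0 - V m"
  proof -
    have "a (Suc m mod N) * v (Suc (Suc m)) = (x - b (Suc m mod N)) * v (Suc m) - a (m mod N) * v m"
      by (rule rec_sol_real[where N = N and b = b and a = a, OF anzC sv])
    then have "a 0 * v (Suc N) = x * v N - a 0 * v m" using Nm a_last b0 by simp
    then show "v (Suc N) = x * v N / a 0 - v m" using anzC[of 0] by (simp add: field_simps)
    have "a (Suc m mod N) * V (Suc (Suc m)) = (-x - b (Suc m mod N)) * V (Suc m) - a (m mod N) * V m"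
      by (rule rec_sol_real[where N = N and b = b and a = a, OF anzC sV])
    then have "a 0 * V (Suc N) = -x * V N - a 0 * V m" using Nm a_last b0 by simp
    then show "V (Suc N) = -x * V N / a 0 - V m" using anzC[of 0] by (simp add: field_simps)
  qed
  have "poly (Delta_poly N b a) (-x) = U N + V (Suc N)"
    using poly_Delta_gen[where N = N and b = b and a = a, OF anzC, of "-x"] unfolding U_def V_def by simp
  also have "\<dots> = s * (u N + (x * v N / a 0 - v m))" using P VN1 by (simp add: algebra_simps)
  also have "u N + (x * v N / a 0 - v m) = poly (Delta_poly N b a) x"
    using poly_Delta_gen[where N = N and b = b and a = a, OF anzC, of x] vN1 unfolding u_def v_def by simp
  finally show ?thesis unfolding s_def .
qed

lemma Delta0: "even N \<Longrightarrow> (poly (Delta_poly N b a) 0)^2 = 4"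
proof -
  assume "even N"
  then obtain h where Nh: "N = 2 * h" by auto
  have h1: "h \<ge> 1" using N2 Nh by simp
  have sa: "a ((h+j) mod N) = a ((h - j - 1) mod N)" if "j < h" for j
  proof -
    have "N + N - 1 - (h + j) = N + (h - 1 - j)" using that Nh by simp
    then have "(N + N - 1 - (h+j)) mod N = h - 1 - j" using that Nh modN[of "h - 1 - j"] by simp
    then show ?thesis using Sa[of "h+j"] that Nh by simp
  qed
  have sb: "b ((h+j) mod N) = - b ((h - j) mod N)" if "j < h" for j
  proof -
    have "N - (h + j) = h - j" using that Nh by simp
    then show ?thesis using Sb[of "h+j"] that Nh by simp
  qed
  have key: "y N = (-1)^h * y 0 \<and> y (Suc N) = (-1)^h * y 1" if y: "rec_sol N b a (0::real) y" for y
  proof -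
    have y': "rec_sol N b a (-0::real) y" using y by simp
    have bh: "b h = 0" using Sb[of h] Nh h1 by simp
    have ah: "a h = a (h - 1)"
    proof -
      have "N + N - 1 - (h - 1) = N + h" using Nh h1 by simp
      then show ?thesis using Sa[of "h - 1"] Nh h1 modN[of h] by simp
    qed
    have "a (Suc (h-1) mod N) * y (Suc (Suc (h-1))) = (0 - b (Suc (h-1) mod N)) * y (Suc (h-1)) - a ((h-1) mod N) * y (h-1)"
      by (rule rec_sol_real[where N = N and b = b and a = a, OF anzC y])
    moreover have "Suc (h-1) = h" using h1 by simp
    moreover have "h mod N = h" "(h-1) mod N = h - 1" using Nh h1 by simp_all
    ultimately have "a h * y (Suc h) = - a h * y (h - 1)" using bh ah by simp
    then have "a h * (y (Suc h) + y (h - 1)) = 0" by (simp add: algebra_simps)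
    then have "y (Suc h) + y (h - 1) = 0" using anzC[of h] \<open>h mod N = h\<close> by simp
    then have w1: "y (Suc h) = - y (h - 1)" by (simp add: eq_neg_iff_add_eq_0)
    have R: "y (h + j) = (-1)^j * y (h - j)" if "j \<le> h" for j
      by (rule refl_center[where N = N and b = b and a = a and c = h and d = h, OF anzC sa sb y y' refl h1 refl w1 that])
    have yN: "y N = (-1)^h * y 0" using R[of h] Nh by (simp add: mult_2)
    have yNm: "y (N - 1) = (-1)^(h-1) * y 1"
    proof -
      have "h + (h - 1) = N - 1" "h - (h - 1) = 1" using Nh h1 by simp_all
      then show ?thesis using R[of "h - 1"] by simp
    qed
    have "a (Suc (N-1) mod N) * y (Suc (Suc (N-1))) = (0 - b (Suc (N-1) mod N)) * y (Suc (N-1)) - a ((N-1) mod N) * y (N-1)"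
      by (rule rec_sol_real[where N = N and b = b and a = a, OF anzC y])
    moreover have "Suc (N-1) = N" "(N-1) mod N = N - 1" using N2 by simp_all
    ultimately have "a 0 * y (Suc N) = - a 0 * y (N - 1)" using b0 a_last by simp
    then have "a 0 * (y (Suc N) + y (N - 1)) = 0" by (simp add: algebra_simps)
    then have "y (Suc N) + y (N - 1) = 0" using anzC[of 0] by simp
    then have "y (Suc N) = - y (N - 1)" by (simp add: eq_neg_iff_add_eq_0)
    also have "\<dots> = (-1)^h * y 1" using yNm h1 by (cases h) simp_all
    finally show ?thesis using yN by simp
  qed
  have ku: "ev N b a 1 0 (0::real) N = (-1)^h" using key[OF rec_sol_ev[where N = N and b = b and a = a, OF anzC]] ev_init[where N = N and b = b and a = a, OF anzC] by simp
  have kv: "ev N b a 0 1 (0::real) (Suc N) = (-1)^h" using key[OF rec_sol_ev[where N = N and b = b and a = a, OF anzC]] ev_init[where N = N and b = b and a = a, OF anzC] by simp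
  have "poly (Delta_poly N b a) 0 = 2 * (-1)^h" using poly_Delta_gen[where N = N and b = b and a = a, OF anzC, of "0::real"] ku kv by simp
  then show ?thesis by (simp add: power_mult_distrib flip: power_mult)
qed

end



theorem corollary4p3:
  fixes N :: nat and b a :: "nat \<Rightarrow> real"
  assumes "N \<ge> 2" and "inM N b a" and "S_fixed N b a"
  shows "(\<forall>k. 1 \<le> k \<and> k \<le> N - 1 \<longrightarrow> action N b a k = action N b a (N - k))
       \<and> (\<forall>j. 1 \<le> j \<and> j \<le> 2 * N \<longrightarrow> lam N b a j = - lam N b a (2 * N + 1 - j))
       \<and> (even N \<longrightarrow> action N b a (N div 2) = 0 \<and> lam N b a N = 0 \<and> lam N b a (N + 1) = 0)"
proof -
  note anz = anzC[OF assms]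
  define D where "D = Delta_poly N b a"
  define q where "q = D\<^sup>2 - 4"
  have degD: "degree D = N" unfolding D_def
    by (rule deg_Delta[where N = N and b = b and a = a, OF anz]) (use assms in simp)
  have D0: "D \<noteq> 0" using degD assms by auto
  have degq: "degree q = 2 * N"
  proof -
    have h: "degree (D\<^sup>2) = 2 * N" using degree_power_eq[OF D0, of 2] degD by simp
    have e: "D\<^sup>2 - 4 = D\<^sup>2 + (- 4 :: real poly)" by (rule diff_conv_add_uminus)
    have "degree (- 4 :: real poly) = 0" by (simp only: degree_minus degree_numeral)
    then have "degree (- 4 :: real poly) < degree (D\<^sup>2)" using h assms by linarith
    then have "degree (D\<^sup>2 + (- 4 :: real poly)) = degree (D\<^sup>2)" by (rule degree_add_eq_left)
    then show ?thesis unfolding q_def e h .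
  qed
  have q0: "q \<noteq> 0" using degq assms by auto
  have rr: "Im z = 0" if z: "poly (map_poly of_real q) z = 0" for z
  proof -
    have "q = D * D - [:4:]" unfolding q_def by (simp add: power2_eq_square numeral_poly)
    then have "map_poly (of_real::real\<Rightarrow>complex) q = map_poly of_real D * map_poly of_real D - [:4:]"
      by (simp add: mp_diff mp_mult mp_pCons)
    then have "poly (map_poly of_real D) z * poly (map_poly of_real D) z - 4 = 0" using z by simp
    then have "(poly (map_poly of_real D) z - 2) * (poly (map_poly of_real D) z + 2) = 0"
      by (simp add: algebra_simps)
    then have "poly (map_poly of_real D) z = 2 * complex_of_real 1 \<or> poly (map_poly of_real D) z = 2 * complex_of_real (-1)"
      by (auto simp: eq_neg_iff_add_eq_0)
    then show ?thesis
      using real_root[where N = N and b = b and a = a, OF anz, of 1 z] real_root[where N = N and b = b and a = a, OF anz, of "-1" z] assms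
      unfolding D_def by auto
  qed
  have evq: "poly q (-x) = poly q x" for x
  proof -
    have "poly D (-x) = (-1)^N * poly D x" unfolding D_def by (rule Delta_neg[OF assms])
    then have "(poly D (-x))\<^sup>2 = (poly D x)\<^sup>2" by (simp add: power_mult_distrib flip: power_mult)
    then show ?thesis unfolding q_def by simp
  qed
  have SR: "image_mset uminus (proots q) = proots q \<and> size (proots q) = degree q"
    by (rule sym_roots[OF q0 rr evq])
  define xs where "xs = sorted_list_of_multiset (proots q)"
  have mx: "mset xs = proots q" unfolding xs_def by simp
  have "length xs = size (mset xs)" by (simp only: size_mset)
  then have len: "length xs = 2 * N" unfolding mx using SR degq by simp
  have srt: "sorted xs" unfolding xs_def by simp
  have ms: "mset (map uminus xs) = mset xs" using SR by (simp add: mx)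
  have lamx: "lam N b a j = xs ! (j - 1)" for j unfolding lam_def xs_def q_def D_def by simp
  have sym: "xs ! i = - xs ! (2 * N - 1 - i)" if "i < 2 * N" for i
    using sorted_sym[OF srt ms, of i] that unfolding len by simp
  have II: "lam N b a j = - lam N b a (2 * N + 1 - j)" if "1 \<le> j" "j \<le> 2 * N" for j
  proof -
    have "2 * N - 1 - (j - 1) = 2 * N + 1 - j - 1" using that by simp
    then show ?thesis unfolding lamx using sym[of "j - 1"] that by simp
  qed
  have fev: "arcosh \<bar>Delta N b a (-x) / 2\<bar> = arcosh \<bar>Delta N b a x / 2\<bar>" for x
    unfolding Delta_def using Delta_neg[OF assms, of x] by (simp add: abs_mult)
  have I: "action N b a k = action N b a (N - k)" if k: "1 \<le> k" "k \<le> N - 1" for k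
  proof -
    have l1: "lam N b a (2 * (N - k)) = - lam N b a (2 * k + 1)"
      using II[of "2 * (N - k)"] k by (simp add: algebra_simps)
    have l2: "lam N b a (2 * (N - k) + 1) = - lam N b a (2 * k)"
      using II[of "2 * (N - k) + 1"] k by (simp add: algebra_simps)
    have "integral {- lam N b a (2 * k + 1) .. - lam N b a (2 * k)} (\<lambda>x. arcosh \<bar>Delta N b a x / 2\<bar>)
        = integral {- lam N b a (2 * k + 1) .. - lam N b a (2 * k)} (\<lambda>x. arcosh \<bar>Delta N b a (-x) / 2\<bar>)"
      by (simp only: fev)
    also have "\<dots> = integral {lam N b a (2 * k) .. lam N b a (2 * k + 1)} (\<lambda>x. arcosh \<bar>Delta N b a x / 2\<bar>)"
      by (rule Henstock_Kurzweil_Integration.integral_reflect_real[where a = "lam N b a (2 * k)" and b = "lam N b a (2 * k + 1)" and f = "\<lambda>x. arcosh \<bar>Delta N b a x / 2\<bar>"])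
    finally show ?thesis unfolding action_def l1 l2 by simp
  qed
  have III: "action N b a (N div 2) = 0 \<and> lam N b a N = 0 \<and> lam N b a (N + 1) = 0" if ev: "even N"
  proof -
    have "(poly D 0)\<^sup>2 = 4" unfolding D_def by (rule Delta0[OF assms ev])
    then have "poly q 0 = 0" unfolding q_def by simp
    then have "0 \<in># proots q" using q0 by simp
    then have z: "0 \<in> set xs" unfolding xs_def by simp
    have sm: "xs ! (N - 1) = - xs ! N"
      using sym[of "N - 1"] assms by (simp add: algebra_simps)
    have le: "xs ! (N - 1) \<le> xs ! N" using srt len assms by (simp add: sorted_iff_nth_mono)
    have mid: "xs ! N = 0"
    proof (rule ccontr)
      assume ne: "xs ! N \<noteq> 0"
      then have pos: "xs ! N > 0" using sm le by linarith
      then have neg: "xs ! (N - 1) < 0" using sm by linarith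
      obtain i where i: "i < 2 * N" "xs ! i = 0" using z len by (metis in_set_conv_nth)
      show False
      proof (cases "i \<le> N - 1")
        case True
        then have "xs ! i \<le> xs ! (N - 1)" using srt len assms by (simp add: sorted_iff_nth_mono)
        then show False using i neg by linarith
      next
        case False
        then have "N \<le> i" using assms by simp
        then have "xs ! N \<le> xs ! i" using srt len i by (intro sorted_nth_mono) auto
        then show False using i pos by linarith
      qed
    qed
    have L1: "lam N b a N = 0" using lamx[of N] sm mid by simp
    have L2: "lam N b a (N + 1) = 0" using lamx[of "N + 1"] mid by simp
    have "2 * (N div 2) = N" using ev by simp
    then have "action N b a (N div 2) = 0" unfolding action_def using L1 L2 by simp
    then show ?thesis using L1 L2 by simp
  qed
  show ?thesis using I II III by blast
qed


end
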